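(* Fix $d\in[0,D]$ and consider the convex optimization problem \[ U(d)=\min_{\{E_n\},\{t_n\}} \ \sum_{n=1}^N E_n\left(1+\frac{h_n}{g_n}\right) \] subject to \[ d\le \sum_{n=1}^N t_n W\ln\left(1+\frac{E_n h_n}{t_n\sigma^2 W}\right),\qquad 2\sum_{n=1}^N t_n\le T-\frac{Ld}{f_B},\qquad E_n\ge 0,\ t_n\ge 0\ \ \forall n. \] Let $(\{E_n\},\{t_n\})$ be an optimal solution such that, for each $n$, either $E_n=t_n=0$ or both $E_n>0$ and $t_n>0$. Let $\mathcal P_T=\{n: E_n>0,\ t_n>0\}$, and define $\mathrm{SNR}_n^T=\frac{E_n h_n}{t_n\sigma^2 W}$ for $n\in\mathcal P_T$. Then \[ \mathrm{SNR}_i^T=\mathrm{SNR}_j^T \quad\text{for all } i,j\in\mathcal P_T, \] i.e., this quantity takes a common value $\mathrm{SNR}^T$.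
   Context: All parameters $N, h_n, g_n, W, \sigma^2, L, D, T, f_B$ are given positive constants, and $n$ ranges over $\{1,\dots,N\}$. The term $t_n W\ln\left(1+\frac{E_n h_n}{t_n\sigma^2W}\right)$ is interpreted as $0$ when $t_n=0$. *)

theory Defs
  imports Complex_Main
begin

definition rate :: "real \<Rightarrow> real \<Rightarrow> real \<Rightarrow> real \<Rightarrow> real \<Rightarrow> real" where
  "rate W \<sigma>2 h E t = (if t = 0 then 0 else t * W * ln (1 + E * h / (t * \<sigma>2 * W)))"

definition energy_obj :: "nat \<Rightarrow> (nat \<Rightarrow> real) \<Rightarrow> (nat \<Rightarrow> real) \<Rightarrow> (nat \<Rightarrow> real) \<Rightarrow> real" where
  "energy_obj N h g E = (\<Sum>n=1..N. E n * (1 + h n / g n))"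

definition feasible ::
  "nat \<Rightarrow> (nat \<Rightarrow> real) \<Rightarrow> real \<Rightarrow> real \<Rightarrow> real \<Rightarrow> real \<Rightarrow> real
   \<Rightarrow> real \<Rightarrow> (nat \<Rightarrow> real) \<Rightarrow> (nat \<Rightarrow> real) \<Rightarrow> bool" where
  "feasible N h W \<sigma>2 L T fB d E t \<longleftrightarrow>
     d \<le> (\<Sum>n=1..N. rate W \<sigma>2 (h n) (E n) (t n)) \<and>
     2 * (\<Sum>n=1..N. t n) \<le> T - L * d / fB \<and>
     (\<forall>n\<in>{1..N}. E n \<ge> 0 \<and> t n \<ge> 0)"

definition optimal ::
  "nat \<Rightarrow> (nat \<Rightarrow> real) \<Rightarrow> (nat \<Rightarrow> real) \<Rightarrow> real \<Rightarrow> real \<Rightarrow> real \<Rightarrow> real \<Rightarrow> real \<Rightarrow> real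
   \<Rightarrow> (nat \<Rightarrow> real) \<Rightarrow> (nat \<Rightarrow> real) \<Rightarrow> bool" where
  "optimal N h g W \<sigma>2 L T fB d E t \<longleftrightarrow>
     feasible N h W \<sigma>2 L T fB d E t \<and>
     (\<forall>E' t'. feasible N h W \<sigma>2 L T fB d E' t' \<longrightarrow> energy_obj N h g E \<le> energy_obj N h g E')"

end

theory Submission imports Defs begin

definition pert :: "real \<Rightarrow> real \<Rightarrow> real \<Rightarrow> real \<Rightarrow> real \<Rightarrow> real \<Rightarrow> real \<Rightarrow> real" where
  "pert W t k R a b s = (t + a*s)/k * (exp ((R + b*s)/((t + a*s)*W)) - 1)"

lemma pert_deriv:
  assumes "t > 0" "k > 0" "W > 0" "x > -1" "R = t*W*ln(1+x)"
  shows "(pert W t k R a b has_real_derivative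
          (a/k*(x - (1+x)*ln(1+x)) + b*(1+x)/(k*W))) (at 0)"
proof -
  have e: "exp (R/(t*W)) = 1 + x" using assms by simp
  have "((\<lambda>s. (t + a*s)/k * (exp ((R + b*s)/((t + a*s)*W)) - 1)) has_real_derivative
     (a/k * (exp ((R + b*0)/((t + a*0)*W)) - 1) + (t+a*0)/k * (exp ((R + b*0)/((t + a*0)*W)) *
       ((b*((t+a*0)*W) - (R+b*0)*(a*W))/((t+a*0)*W)^2)))) (at 0)"
    using assms
    by (auto intro!: derivative_eq_intros simp: power2_eq_square field_simps)
  moreover have "(a/k * (exp ((R + b*0)/((t + a*0)*W)) - 1) + (t+a*0)/k * (exp ((R + b*0)/((t + a*0)*W)) *
       ((b*((t+a*0)*W) - (R+b*0)*(a*W))/((t+a*0)*W)^2))) = 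
       (a/k*(x - (1+x)*ln(1+x)) + b*(1+x)/(k*W))"
    using assms e by (simp add: field_simps power2_eq_square)
  ultimately show ?thesis unfolding pert_def by simp
qed

lemma g_strict:
  fixes x y :: real
  assumes "x > 0" "y > 0" "x < y"
  shows "ln (1+x) - x/(1+x) < ln (1+y) - y/(1+y)"
proof -
  have "ln ((1+x)/(1+y)) \<le> (1+x)/(1+y) - 1" using assms ln_le_minus_one[of "(1+x)/(1+y)"] by simp
  hence "ln (1+y) - ln (1+x) \<ge> 1 - (1+x)/(1+y)" using assms by (simp add: ln_div)
  moreover have "y/(1+y) - x/(1+x) < 1 - (1+x)/(1+y)"
  proof -
    have e1: "y/(1+y) - x/(1+x) = (y-x)/((1+y)*(1+x))" using assms by (simp add: field_simps)
    have e2: "1 - (1+x)/(1+y) = (y-x)/(1+y)" using assms by (simp add: field_simps)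
    have "(y-x)/((1+y)*(1+x)) < (y-x)/(1+y)"
      using assms by (simp add: divide_strict_left_mono mult_pos_pos)
    thus ?thesis using e1 e2 by simp
  qed
  ultimately show ?thesis by linarith
qed

lemma sum_two:
  assumes "finite S" "i \<in> S" "j \<in> S" "i \<noteq> j"
  shows "(\<Sum>n\<in>S. F n) = F i + F j + (\<Sum>n\<in>S-{i,j}. F n)"
proof -
  have "(\<Sum>n\<in>S. F n) = F i + (\<Sum>n\<in>S-{i}. F n)" using assms by (simp add: sum.remove)
  also have "(\<Sum>n\<in>S-{i}. F n) = F j + (\<Sum>n\<in>S-{i}-{j}. F n)" using assms by (intro sum.remove) auto
  finally show ?thesis by (simp add: Diff_insert2[symmetric] insert_commute add.assoc)
qed

lemma pert_rate:
  assumes "t' > 0" "W > 0" "\<sigma>2 > 0" "hh > 0"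
  shows "rate W \<sigma>2 hh (t'/(hh/(\<sigma>2*W)) * (exp (R'/(t'*W)) - 1)) t' = R'"
proof -
  have "t'/(hh/(\<sigma>2*W)) * (exp (R'/(t'*W)) - 1) * hh / (t' * \<sigma>2 * W) = exp (R'/(t'*W)) - 1"
    using assms by (simp add: field_simps)
  thus ?thesis using assms unfolding rate_def by simp
qed

theorem lemma2:
  fixes N :: nat and h g E t :: "nat \<Rightarrow> real"
    and W \<sigma>2 L D T fB d :: real
  assumes "N > 0"
    and "\<forall>n\<in>{1..N}. h n > 0 \<and> g n > 0"
    and "W > 0" "\<sigma>2 > 0" "L > 0" "D > 0" "T > 0" "fB > 0"
    and "0 \<le> d" "d \<le> D"
    and "optimal N h g W \<sigma>2 L T fB d E t"
    and "\<forall>n\<in>{1..N}. (E n = 0 \<and> t n = 0) \<or> (E n > 0 \<and> t n > 0)"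
  shows "\<forall>i\<in>{n\<in>{1..N}. E n > 0 \<and> t n > 0}. \<forall>j\<in>{n\<in>{1..N}. E n > 0 \<and> t n > 0}.
           E i * h i / (t i * \<sigma>2 * W) = E j * h j / (t j * \<sigma>2 * W)"
proof (intro ballI, rule ccontr)
  fix i j
  assume i: "i \<in> {n\<in>{1..N}. E n > 0 \<and> t n > 0}" and j: "j \<in> {n\<in>{1..N}. E n > 0 \<and> t n > 0}"
    and ne: "E i * h i / (t i * \<sigma>2 * W) \<noteq> E j * h j / (t j * \<sigma>2 * W)"
  have W: "W > 0" and s2: "\<sigma>2 > 0" using assms by auto
  have feas: "feasible N h W \<sigma>2 L T fB d E t"
    and opt: "\<And>E' t'. feasible N h W \<sigma>2 L T fB d E' t' \<Longrightarrow> energy_obj N h g E \<le> energy_obj N h g E'"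
    using assms(11) unfolding optimal_def by auto
  define k where "k n = h n / (\<sigma>2*W)" for n
  define x where "x n = E n * h n / (t n * \<sigma>2 * W)" for n
  define c where "c n = 1 + h n / g n" for n
  define R where "R n = rate W \<sigma>2 (h n) (E n) (t n)" for n
  define P where "P n = (x n - (1 + x n)*ln(1 + x n))/k n" for n
  define Q where "Q n = (1 + x n)/(k n * W)" for n
  define A where "A = c i * P i - c j * P j"
  define B where "B = c i * Q i - c j * Q j"
  have ij: "i \<noteq> j" using ne by auto
  have hi: "h i > 0" "g i > 0" "t i > 0" "E i > 0" "i \<in> {1..N}" using i assms(2) by auto
  have hj: "h j > 0" "g j > 0" "t j > 0" "E j > 0" "j \<in> {1..N}" using j assms(2) by auto
  have pos: "k n > 0" "x n > 0" "c n > 0" if "n \<in> {i,j}" for n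
  proof -
    have "h n / g n > 0" using that hi hj by auto
    thus "k n > 0" "x n > 0" "c n > 0"
      using that hi hj W s2 by (auto simp: k_def x_def c_def)
  qed
  have Rn: "R n = t n * W * ln (1 + x n)" if "n \<in> {i,j}" for n
    using that hi hj unfolding R_def rate_def x_def by auto
  have Rpos: "R n > 0" if "n \<in> {i,j}" for n
    using Rn[OF that] pos[OF that] that hi hj W by auto
  have AB: "A\<^sup>2 + B\<^sup>2 > 0"
  proof (rule ccontr)
    assume "\<not> ?thesis"
    hence "A\<^sup>2 + B\<^sup>2 = 0" by (smt (verit) zero_le_power2)
    hence A0: "A = 0" and B0: "B = 0" by (simp_all add: sum_power2_eq_zero_iff)
    define K where "K = c i * (1 + x i) / k i"
    have "K = W * (c i * Q i)" "c j * (1 + x j) / k j = W * (c j * Q j)"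
      using W pos[of i] pos[of j] unfolding Q_def K_def by (auto simp: field_simps)
    hence K2: "K = c j * (1 + x j) / k j" using B0 unfolding B_def by simp
    have Kp: "K > 0" using pos[of i] by (auto simp: K_def)
    have q: "(1 + x n)*(x n/(1+x n) - ln (1 + x n)) = x n - (1 + x n)*ln(1+x n)" if "n \<in> {i,j}" for n
      using pos[OF that] by (simp add: field_simps)
    have Pi: "c i * P i = K * (x i/(1+x i) - ln (1 + x i))"
      using q[of i] unfolding K_def P_def by simp
    have Pj: "c j * P j = K * (x j/(1+x j) - ln (1 + x j))"
      using q[of j] unfolding K2 P_def by simp
    have "x i/(1+x i) - ln (1 + x i) = x j/(1+x j) - ln (1 + x j)"
      using A0 Pi Pj Kp unfolding A_def by simp
    moreover have "x i \<noteq> x j" using ne by (simp add: x_def)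
    ultimately show False using g_strict[of "x i" "x j"] g_strict[of "x j" "x i"] pos
      by (cases "x i < x j") (auto simp: neq_iff)
  qed
  define al where "al = - A"
  define be where "be = - B"
  define C where "C s = c i * pert W (t i) (k i) (R i) al be s + c j * pert W (t j) (k j) (R j) (-al) (-be) s" for s
  have dC: "(C has_real_derivative (c i * (al/k i*(x i - (1+x i)*ln(1+x i)) + be*(1+x i)/(k i*W))
     + c j * ((-al)/k j*(x j - (1+x j)*ln(1+x j)) + (-be)*(1+x j)/(k j*W)))) (at 0)"
    unfolding C_def
    using pert_deriv[of "t i" "k i" W "x i" "R i" al be] pert_deriv[of "t j" "k j" W "x j" "R j" "-al" "-be"]
      pos[of i] pos[of j] hi hj W Rn[of i] Rn[of j]
    by (auto intro!: derivative_eq_intros)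
  have u: "c n * (a/k n*(x n - (1+x n)*ln(1+x n)) + b*(1+x n)/(k n*W)) = a*(c n*P n) + b*(c n*Q n)" if "n \<in> {i,j}" for n a b
    using pos[OF that] W by (simp add: P_def Q_def field_simps)
  have dval: "c i * (al/k i*(x i - (1+x i)*ln(1+x i)) + be*(1+x i)/(k i*W))
     + c j * ((-al)/k j*(x j - (1+x j)*ln(1+x j)) + (-be)*(1+x j)/(k j*W)) = - (A\<^sup>2 + B\<^sup>2)"
  proof -
    have "c i * (al/k i*(x i - (1+x i)*ln(1+x i)) + be*(1+x i)/(k i*W))
     + c j * ((-al)/k j*(x j - (1+x j)*ln(1+x j)) + (-be)*(1+x j)/(k j*W))
      = (al*(c i*P i) + be*(c i*Q i)) + ((-al)*(c j*P j) + (-be)*(c j*Q j))"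
      using u[of i al be] u[of j "-al" "-be"] by simp
    also have "\<dots> = al * A + be * B" unfolding A_def B_def by (simp add: algebra_simps)
    also have "\<dots> = - (A\<^sup>2 + B\<^sup>2)" unfolding al_def be_def by (simp add: power2_eq_square)
    finally show ?thesis .
  qed
  obtain \<delta> where \<delta>: "\<delta> > 0" "\<And>s. s > 0 \<Longrightarrow> s < \<delta> \<Longrightarrow> C 0 > C (0 + s)"
    using DERIV_neg_dec_right[OF dC] dval AB by auto
  define M where "M = \<bar>al\<bar> + \<bar>be\<bar> + 1"
  define m where "m = min (min (t i) (t j)) (min (R i) (R j))"
  have Mp: "M > 0" by (simp add: M_def)
  have mp: "m > 0" using hi hj Rpos[of i] Rpos[of j] by (simp add: m_def)
  define s where "s = min (\<delta>/2) (m/(2*M))"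
  have sp: "s > 0" "s < \<delta>" using \<delta> Mp mp by (auto simp: s_def)
  have sM: "s * M \<le> m/2" using Mp mp by (simp add: s_def min_def field_simps)
  have small: "\<bar>al * s\<bar> < m" "\<bar>be * s\<bar> < m"
  proof -
    have "\<bar>al * s\<bar> \<le> s * M" "\<bar>be * s\<bar> \<le> s * M" using sp by (auto simp: M_def abs_mult algebra_simps)
    thus "\<bar>al * s\<bar> < m" "\<bar>be * s\<bar> < m" using sM mp by auto
  qed
  have mle: "m \<le> t i" "m \<le> t j" "m \<le> R i" "m \<le> R j" by (auto simp: m_def)
  define ti where "ti = t i + al * s"
  define tj where "tj = t j + (-al) * s"
  define Ri where "Ri = R i + be * s"
  define Rj where "Rj = R j + (-be) * s"
  have tpos: "ti > 0" "tj > 0" "Ri > 0" "Rj > 0"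
    using small mle by (auto simp: ti_def tj_def Ri_def Rj_def)
  define Ei where "Ei = pert W (t i) (k i) (R i) al be s"
  define Ej where "Ej = pert W (t j) (k j) (R j) (-al) (-be) s"
  have Ei: "Ei = ti/(h i/(\<sigma>2*W)) * (exp (Ri/(ti*W)) - 1)"
    unfolding Ei_def pert_def ti_def Ri_def k_def by simp
  have Ej: "Ej = tj/(h j/(\<sigma>2*W)) * (exp (Rj/(tj*W)) - 1)"
    unfolding Ej_def pert_def tj_def Rj_def k_def by simp
  have Einn: "Ei \<ge> 0" "Ej \<ge> 0" using tpos hi hj W s2 by (auto simp: Ei Ej)
  define E' where "E' = E(i := Ei, j := Ej)"
  define t' where "t' = t(i := ti, j := tj)"
  have rate': "rate W \<sigma>2 (h i) (E' i) (t' i) = Ri" "rate W \<sigma>2 (h j) (E' j) (t' j) = Rj"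
    using pert_rate[of ti W \<sigma>2 "h i" Ri] pert_rate[of tj W \<sigma>2 "h j" Rj] tpos hi hj W s2 ij
    by (auto simp: E'_def t'_def Ei Ej)
  have fin: "finite {1..N}" by simp
  have rsum: "(\<Sum>n=1..N. rate W \<sigma>2 (h n) (E' n) (t' n)) = (\<Sum>n=1..N. rate W \<sigma>2 (h n) (E n) (t n))"
  proof -
    have "(\<Sum>n=1..N. rate W \<sigma>2 (h n) (E' n) (t' n)) = rate W \<sigma>2 (h i) (E' i) (t' i) + rate W \<sigma>2 (h j) (E' j) (t' j)
      + (\<Sum>n\<in>{1..N}-{i,j}. rate W \<sigma>2 (h n) (E' n) (t' n))"
      by (rule sum_two[OF fin hi(5) hj(5) ij])
    also have "(\<Sum>n\<in>{1..N}-{i,j}. rate W \<sigma>2 (h n) (E' n) (t' n)) = (\<Sum>n\<in>{1..N}-{i,j}. rate W \<sigma>2 (h n) (E n) (t n))"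
      by (rule sum.cong) (auto simp: E'_def t'_def)
    also have "(\<Sum>n=1..N. rate W \<sigma>2 (h n) (E n) (t n)) = rate W \<sigma>2 (h i) (E i) (t i) + rate W \<sigma>2 (h j) (E j) (t j)
      + (\<Sum>n\<in>{1..N}-{i,j}. rate W \<sigma>2 (h n) (E n) (t n))"
      by (rule sum_two[OF fin hi(5) hj(5) ij])
    ultimately show ?thesis using rate' unfolding Ri_def Rj_def R_def by simp
  qed
  have tsum: "(\<Sum>n=1..N. t' n) = (\<Sum>n=1..N. t n)"
  proof -
    have "(\<Sum>n=1..N. t' n) = t' i + t' j + (\<Sum>n\<in>{1..N}-{i,j}. t' n)"
      by (rule sum_two[OF fin hi(5) hj(5) ij])
    also have "(\<Sum>n\<in>{1..N}-{i,j}. t' n) = (\<Sum>n\<in>{1..N}-{i,j}. t n)"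
      by (rule sum.cong) (auto simp: t'_def)
    also have "(\<Sum>n=1..N. t n) = t i + t j + (\<Sum>n\<in>{1..N}-{i,j}. t n)"
      by (rule sum_two[OF fin hi(5) hj(5) ij])
    ultimately show ?thesis using ij by (simp add: t'_def ti_def tj_def)
  qed
  have feas': "feasible N h W \<sigma>2 L T fB d E' t'"
    using feas rsum tsum Einn tpos unfolding feasible_def E'_def t'_def by auto
  have osum: "energy_obj N h g E' = energy_obj N h g E - c i * E i - c j * E j + C s"
  proof -
    have "energy_obj N h g E' = E' i * (1 + h i / g i) + E' j * (1 + h j / g j)
      + (\<Sum>n\<in>{1..N}-{i,j}. E' n * (1 + h n / g n))"
      unfolding energy_obj_def by (rule sum_two[OF fin hi(5) hj(5) ij])
    also have "(\<Sum>n\<in>{1..N}-{i,j}. E' n * (1 + h n / g n)) = (\<Sum>n\<in>{1..N}-{i,j}. E n * (1 + h n / g n))"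
      by (rule sum.cong) (auto simp: E'_def)
    also have "energy_obj N h g E = E i * (1 + h i / g i) + E j * (1 + h j / g j)
      + (\<Sum>n\<in>{1..N}-{i,j}. E n * (1 + h n / g n))"
      unfolding energy_obj_def by (rule sum_two[OF fin hi(5) hj(5) ij])
    moreover have "E' i = Ei" "E' j = Ej" using ij by (auto simp: E'_def)
    ultimately show ?thesis by (simp add: C_def Ei_def Ej_def c_def algebra_simps)
  qed
  have C0: "C 0 = c i * E i + c j * E j"
  proof -
    have "pert W (t n) (k n) (R n) a b 0 = E n" if "n \<in> {i,j}" for n a b
    proof -
      have "exp (R n / (t n * W)) = 1 + x n" using Rn[OF that] pos[OF that] that hi hj W by auto
      thus ?thesis using that hi hj W s2 unfolding pert_def k_def x_def by (auto simp: field_simps)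
    qed
    thus ?thesis unfolding C_def by simp
  qed
  have "C s < C 0" using \<delta>(2)[OF sp] by simp
  hence "energy_obj N h g E' < energy_obj N h g E" using osum C0 by simp
  with opt[OF feas'] show False by simp
qed

end
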